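(* Let $k_1<k_2$ and let $p_1,\ldots,p_\ell$ be the primes in $S(k_1,k_2):=\{p\in\mathcal{P}:k_1<p\le k_2\}$. Let $n,m\in\mathbb{N}$ satisfy $m\prod_{j=1}^{\ell}p_j\le n<(m+1)\prod_{j=1}^{\ell}p_j$. Let $X_1,\ldots,X_n$ be i.i.d. uniform on $\{1,\ldots,n\}$, and let $\tilde X_1,\ldots,\tilde X_n$ be i.i.d. with $\tilde X_i=p_1^{c_1}\cdots p_\ell^{c_\ell}$ where $c_1,\ldots,c_\ell$ are independent Bernoulli variables with parameters $1/p_1,\ldots,1/p_\ell$. For a prime $q$ let $Y_q:=\#\{i:q\mid X_i\}$ and $\tilde Y_q:=\#\{i:q\mid\tilde X_i\}$. Then there exists a coupling $\mu$ of $(X_i)_{i\le n}$ and $(\tilde X_i)_{i\le n}$ (a probability measure with these two marginal laws) such that for every $\epsilon>0$, \[ \mu\left(\sum_{q\in S(k_{1},k_{2})}Y_{q}^{2}-\sum_{q\in S(k_{1},k_{2})}\tilde{Y}_{q}^{2}\geq n^{2}\epsilon\right)\leq2^{n}\left(\frac{1}{m}\right)^{\frac{n\epsilon}{2k_{2}}}. \]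
   Context: $\mathcal{P}$ denotes the set of primes. *)

theory Defs
  imports "HOL-Probability.Probability"
begin

definition primes_between :: "nat \<Rightarrow> nat \<Rightarrow> nat set" where
  "primes_between k1 k2 = {p. prime p \<and> k1 < p \<and> p \<le> k2}"

definition unif_law :: "nat \<Rightarrow> nat pmf" where
  "unif_law n = pmf_of_set {1..n}"

definition tilde_law :: "nat set \<Rightarrow> nat pmf" where
  "tilde_law S = map_pmf (\<lambda>c. \<Prod>p\<in>S. p ^ (if c p then 1 else 0))
                   (Pi_pmf S False (\<lambda>p. bernoulli_pmf (1 / real p)))"

definition iid_law :: "nat \<Rightarrow> nat pmf \<Rightarrow> (nat \<Rightarrow> nat) pmf" where
  "iid_law n D = Pi_pmf {0..<n} 0 (\<lambda>_. D)"

definition Ycount :: "nat \<Rightarrow> (nat \<Rightarrow> nat) \<Rightarrow> nat \<Rightarrow> nat" where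
  "Ycount n x q = card {i \<in> {0..<n}. q dvd x i}"

end

theory Submission imports Defs begin

definition pat :: "nat set \<Rightarrow> nat \<Rightarrow> nat set" where
  "pat S x = {q\<in>S. q dvd x}"

lemma pat_mult:
  assumes "\<forall>q\<in>S. prime q" "prime p" "p \<notin> S"
  shows "pat S (p * y) = pat S y"
proof -
  have "q dvd p * y \<longleftrightarrow> q dvd y" if "q \<in> S" for q
  proof -
    have pq: "prime q" "q \<noteq> p" using assms that by auto
    have "\<not> q dvd p" using pq assms(2) primes_dvd_imp_eq by blast
    then show ?thesis using pq prime_dvd_mult_iff by blast
  qed
  then show ?thesis unfolding pat_def by auto
qed

lemma image_mult_pat:
  assumes "\<forall>q\<in>S. prime q" "prime p" "p \<notin> S"
  shows "(\<lambda>y. p * y) ` {y\<in>{1..m*P}. pat S y = T} = {x\<in>{1..m*(p*P)}. p dvd x \<and> pat S x = T}"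
proof (intro equalityI subsetI)
  fix x assume "x \<in> (\<lambda>y. p * y) ` {y\<in>{1..m*P}. pat S y = T}"
  then obtain y where y: "x = p*y" "y \<in> {1..m*P}" "pat S y = T" by auto
  have "p \<ge> 1" using assms(2) prime_ge_1_nat by blast
  then have "p * y \<le> m*(p*P)" "1 \<le> p*y" using y(2) by auto
  then show "x \<in> {x\<in>{1..m*(p*P)}. p dvd x \<and> pat S x = T}"
    using y pat_mult[OF assms] by auto
next
  fix x assume x: "x \<in> {x\<in>{1..m*(p*P)}. p dvd x \<and> pat S x = T}"
  then obtain y where y: "x = p*y" by auto
  have "p > 0" using assms(2) prime_gt_0_nat by blast
  have "y \<ge> 1" using x y by (cases y) auto
  moreover have "y \<le> m*P" using x y \<open>p>0\<close> by (auto simp: ac_simps)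
  ultimately show "x \<in> (\<lambda>y. p * y) ` {y\<in>{1..m*P}. pat S y = T}"
    using x y pat_mult[OF assms] by auto
qed

lemma count_pattern:
  assumes "finite S" "\<forall>p\<in>S. prime p"
  shows "T \<subseteq> S \<Longrightarrow> card {x\<in>{1..m * \<Prod>S}. pat S x = T} = m * (\<Prod>q\<in>S-T. q - 1)"
  using assms
proof (induction S arbitrary: T m rule: finite_induct)
  case empty
  then have "{x\<in>{1..m * \<Prod>{}}. pat {} x = T} = {1..m}" by (auto simp: pat_def)
  then show ?case by simp
next
  case (insert p S)
  have pr: "\<forall>q\<in>S. prime q" "prime p" using insert by auto
  have p0: "p > 0" using pr(2) prime_gt_0_nat by blast
  define P where "P = \<Prod>S"
  have PI: "\<Prod>(insert p S) = p * P" using insert P_def by simp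
  have card_img: "card {x\<in>{1..m*(p*P)}. p dvd x \<and> pat S x = T'} = card {y\<in>{1..m*P}. pat S y = T'}" for T' m
  proof -
    have "inj (\<lambda>y. p * y)" using p0 by (auto simp: inj_def)
    then have "card ((\<lambda>y. p * y) ` {y\<in>{1..m*P}. pat S y = T'}) = card {y\<in>{1..m*P}. pat S y = T'}"
      by (meson card_image inj_on_subset subset_UNIV)
    then show ?thesis
      by (simp only: image_mult_pat[OF pr insert(2)])
  qed
  have patI: "pat (insert p S) x = (if p dvd x then insert p (pat S x) else pat S x)" for x
    by (auto simp: pat_def)
  show ?case
  proof (cases "p \<in> T")
    case True
    define T' where "T' = T - {p}"
    have T': "T' \<subseteq> S" "T = insert p T'" "p \<notin> T'" using insert.hyps insert.prems True T'_def by auto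
    have "{x\<in>{1..m * \<Prod>(insert p S)}. pat (insert p S) x = T} = {x\<in>{1..m*(p*P)}. p dvd x \<and> pat S x = T'}"
      unfolding PI patI using T' insert(2) by (auto simp: pat_def)
    then have "card {x\<in>{1..m * \<Prod>(insert p S)}. pat (insert p S) x = T} = m * (\<Prod>q\<in>S-T'. q - 1)"
      using card_img insert(3)[OF T'(1) pr(1)] P_def by simp
    moreover have "insert p S - T = S - T'" using T' insert.hyps by auto
    ultimately show ?thesis by simp
  next
    case False
    have T: "T \<subseteq> S" using insert.prems False by auto
    have "{x\<in>{1..m * \<Prod>(insert p S)}. pat (insert p S) x = T} = 
          {x\<in>{1..(m*p)*P}. pat S x = T} - {x\<in>{1..m*(p*P)}. p dvd x \<and> pat S x = T}"
      unfolding PI patI using False T by (auto simp: ac_simps pat_def)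
    moreover have "{x\<in>{1..m*(p*P)}. p dvd x \<and> pat S x = T} \<subseteq> {x\<in>{1..(m*p)*P}. pat S x = T}"
      by (auto simp: ac_simps)
    ultimately have "card {x\<in>{1..m * \<Prod>(insert p S)}. pat (insert p S) x = T} =
       (m*p) * (\<Prod>q\<in>S-T. q - 1) - m * (\<Prod>q\<in>S-T. q - 1)"
      using card_Diff_subset[of "{x\<in>{1..m*(p*P)}. p dvd x \<and> pat S x = T}"] card_img
        insert(3)[OF T pr(1)] P_def by simp
    also have "\<dots> = m * ((p - 1) * (\<Prod>q\<in>S-T. q - 1))"
      by (simp add: algebra_simps diff_mult_distrib2)
    also have "(p - 1) * (\<Prod>q\<in>S-T. q - 1) = (\<Prod>q\<in>insert p S-T. q - 1)"
    proof -
      have "insert p S - T = insert p (S - T)" using False by auto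
      then show ?thesis using insert(1,2) by simp
    qed
    finally show ?thesis .
  qed
qed

definition hS :: "nat set \<Rightarrow> nat \<Rightarrow> nat" where
  "hS S x = (\<Prod>p\<in>S. p ^ (if p dvd x then 1 else 0))"

lemma pattern_law:
  assumes "finite S" "\<forall>p\<in>S. prime p" "m \<ge> 1"
  shows "map_pmf (\<lambda>x p. p \<in> S \<and> p dvd x) (pmf_of_set {1..m * \<Prod>S})
         = Pi_pmf S False (\<lambda>p. bernoulli_pmf (1 / real p))"
proof (rule pmf_eqI)
  fix c :: "nat \<Rightarrow> bool"
  define M where "M = m * \<Prod>S"
  define g where "g = (\<lambda>x p. p \<in> S \<and> p dvd x)"
  have Ppos: "\<Prod>S > 0" using assms prime_gt_0_nat by (auto simp: prod_pos)
  then have Mpos: "M > 0" using assms M_def by simp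
  have ne: "{1..M} \<noteq> {}" using Mpos by simp
  have lhs: "pmf (map_pmf g (pmf_of_set {1..M})) c = real (card ({1..M} \<inter> g -` {c})) / real M"
    using ne by (simp add: pmf_map measure_pmf_of_set)
  have bern: "pmf (bernoulli_pmf (1 / real p)) b = (if b then 1 / real p else 1 - 1 / real p)" if "p \<in> S" for p b
  proof -
    have "real p \<ge> 1" using assms that prime_ge_1_nat by auto
    then show ?thesis by (cases b) auto
  qed
  show "pmf (map_pmf g (pmf_of_set {1..M})) c = pmf (Pi_pmf S False (\<lambda>p. bernoulli_pmf (1 / real p))) c"
  proof (cases "\<forall>x. x \<notin> S \<longrightarrow> c x = False")
    case True
    define T where "T = {p\<in>S. c p}"
    have T: "T \<subseteq> S" by (auto simp: T_def)
    have "{1..M} \<inter> g -` {c} = {x\<in>{1..M}. pat S x = T}"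
      using True by (auto simp: g_def pat_def T_def fun_eq_iff)
    then have "pmf (map_pmf g (pmf_of_set {1..M})) c = real (m * (\<Prod>q\<in>S-T. q - 1)) / real (m * \<Prod>S)"
      using lhs count_pattern[OF assms(1,2) T, of m] M_def by simp
    also have "\<dots> = real (\<Prod>q\<in>S-T. q - 1) / real (\<Prod>S)"
      using assms(3) by simp
    also have "real (\<Prod>q\<in>S-T. q - 1) = (\<Prod>q\<in>S-T. real q - 1)"
      using assms prime_ge_1_nat by (auto simp: of_nat_prod of_nat_diff intro!: prod.cong)
    also have "(\<Prod>q\<in>S-T. real q - 1) = (\<Prod>q\<in>S. if c q then 1 else real q - 1)"
    proof -
      have "(\<Prod>q\<in>S. if c q then 1 else real q - 1) = (\<Prod>q\<in>S \<inter> - {q. c q}. real q - 1)"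
        by (simp add: prod.If_cases[OF assms(1)])
      moreover have "S \<inter> - {q. c q} = S - T" by (auto simp: T_def)
      ultimately show ?thesis by simp
    qed
    also have "(\<Prod>q\<in>S. if c q then 1 else real q - 1) / real (\<Prod>S) = (\<Prod>q\<in>S. (if c q then 1 else real q - 1) / real q)"
      by (simp add: of_nat_prod prod_dividef)
    also have "\<dots> = (\<Prod>q\<in>S. pmf (bernoulli_pmf (1 / real q)) (c q))"
    proof (intro prod.cong refl)
      fix q assume q: "q \<in> S"
      have "real q \<ge> 1" using assms q prime_ge_1_nat by auto
      then show "(if c q then 1 else real q - 1) / real q = pmf (bernoulli_pmf (1 / real q)) (c q)"
        using bern[OF q] by (auto simp: field_simps)
    qed
    finally show ?thesis using True assms(1) by (simp add: pmf_Pi M_def g_def)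
  next
    case False
    then have "{1..M} \<inter> g -` {c} = {}" by (auto simp: g_def fun_eq_iff)
    moreover have "pmf (Pi_pmf S False (\<lambda>p. bernoulli_pmf (1 / real p))) c = 0"
      using False assms(1) by (subst pmf_Pi) auto
    ultimately show ?thesis using lhs by simp
  qed
qed

lemma unif_tilde:
  assumes "finite S" "\<forall>p\<in>S. prime p" "m \<ge> 1"
  shows "map_pmf (hS S) (pmf_of_set {1..m * \<Prod>S}) = tilde_law S"
proof -
  have "tilde_law S = map_pmf (\<lambda>c. \<Prod>p\<in>S. p ^ (if c p then 1 else 0))
     (map_pmf (\<lambda>x p. p \<in> S \<and> p dvd x) (pmf_of_set {1..m * \<Prod>S}))"
    unfolding tilde_law_def pattern_law[OF assms] ..
  also have "\<dots> = map_pmf (hS S) (pmf_of_set {1..m * \<Prod>S})"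
    by (simp add: pmf.map_comp o_def hS_def[abs_def] cong: prod.cong)
  finally show ?thesis ..
qed

definition nu :: "nat set \<Rightarrow> nat \<Rightarrow> nat \<Rightarrow> (nat \<times> nat) pmf" where
  "nu S M n = bind_pmf (pmf_of_set {1..n})
     (\<lambda>x. if x \<le> M then return_pmf (x, hS S x) else map_pmf (Pair x) (tilde_law S))"

lemma nu_fst: "map_pmf fst (nu S M n) = pmf_of_set {1..n}"
  unfolding nu_def map_bind_pmf
  by (simp add: pmf.map_comp o_def map_pmf_const if_distrib bind_return_pmf' cong: if_cong)

lemma nu_snd:
  assumes "finite S" "\<forall>p\<in>S. prime p" "m \<ge> 1" "M = m * \<Prod>S" "M \<le> n"
  shows "map_pmf snd (nu S M n) = tilde_law S"
proof (rule pmf_eqI)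
  fix y
  define t where "t = pmf (tilde_law S) y"
  define K where "K = (\<lambda>x. if x \<le> M then return_pmf (hS S x) else tilde_law S)"
  have Ppos: "\<Prod>S > 0" using assms prime_gt_0_nat by (auto simp: prod_pos)
  then have Mpos: "M > 0" using assms by simp
  then have npos: "n > 0" using assms(5) by simp
  have eq: "map_pmf snd (nu S M n) = bind_pmf (pmf_of_set {1..n}) K"
    unfolding nu_def map_bind_pmf K_def
    by (simp add: pmf.map_comp o_def if_distrib cong: if_cong)
  have "pmf (bind_pmf (pmf_of_set {1..n}) K) y = (\<Sum>x\<in>{1..n}. pmf (K x) y) / real n"
    using npos by (simp add: pmf_bind integral_pmf_of_set)
  also have "(\<Sum>x\<in>{1..n}. pmf (K x) y) = (\<Sum>x\<in>{1..M}. pmf (K x) y) + (\<Sum>x\<in>{M<..n}. pmf (K x) y)"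
  proof -
    have "{1..n} = {1..M} \<union> {M<..n}" using assms by auto
    moreover have "(\<Sum>x\<in>{1..M} \<union> {M<..n}. pmf (K x) y) = (\<Sum>x\<in>{1..M}. pmf (K x) y) + (\<Sum>x\<in>{M<..n}. pmf (K x) y)"
      by (rule sum.union_disjoint) auto
    ultimately show ?thesis by simp
  qed
  also have "(\<Sum>x\<in>{M<..n}. pmf (K x) y) = real (n - M) * t"
    by (simp add: K_def t_def)
  also have "(\<Sum>x\<in>{1..M}. pmf (K x) y) = (\<Sum>x\<in>{1..M}. indicator {x. hS S x = y} x)"
    by (intro sum.cong refl) (auto simp: K_def pmf_return indicator_def)
  also have "\<dots> = real (card ({1..M} \<inter> hS S -` {y}))"
    by (simp add: indicator_def sum.If_cases vimage_def Int_def)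
  also have "\<dots> = real M * t"
  proof -
    have "t = pmf (map_pmf (hS S) (pmf_of_set {1..M})) y"
      unfolding t_def using unif_tilde[OF assms(1-3)] assms(4) by simp
    also have "\<dots> = real (card ({1..M} \<inter> hS S -` {y})) / real M"
      using Mpos by (simp add: pmf_map measure_pmf_of_set)
    finally show ?thesis using Mpos by (simp add: field_simps)
  qed
  also have "(real M * t + real (n - M) * t) / real n = t"
    using assms npos by (simp add: of_nat_diff field_simps)
  finally show "pmf (map_pmf snd (nu S M n)) y = pmf (tilde_law S) y"
    using eq t_def by simp
qed

lemma nu_support:
  assumes "(a, b) \<in> set_pmf (nu S M n)" "a \<le> M"
  shows "b = hS S a"
  using assms by (auto simp: nu_def split: if_splits)

lemma hS_dvd:
  assumes "finite S" "\<forall>p\<in>S. prime p" "q \<in> S"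
  shows "q dvd hS S x \<longleftrightarrow> q dvd x"
proof -
  have pq: "prime q" using assms by auto
  have "q dvd hS S x \<longleftrightarrow> (\<exists>p\<in>S. q dvd p ^ (if p dvd x then 1 else 0))"
    unfolding hS_def using assms(1) pq by (rule prime_dvd_prod_iff)
  also have "\<dots> \<longleftrightarrow> q dvd x"
  proof
    assume "\<exists>p\<in>S. q dvd p ^ (if p dvd x then 1 else 0)"
    then obtain p where p: "p \<in> S" "q dvd p ^ (if p dvd x then 1 else 0)" by blast
    show "q dvd x"
    proof (cases "p dvd x")
      case True
      then have "q dvd p" using p by simp
      then have "q = p" using pq assms(2) p(1) primes_dvd_imp_eq by blast
      then show ?thesis using True by simp
    next
      case False
      then have "q dvd 1" using p by simp
      then show ?thesis using pq by (simp add: prime_nat_iff)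
    qed
  next
    assume "q dvd x"
    then show "\<exists>p\<in>S. q dvd p ^ (if p dvd x then 1 else 0)" using assms(3) by auto
  qed
  finally show ?thesis .
qed

lemma sq_le:
  fixes a b c n :: real
  assumes "a \<le> b + c" "0 \<le> b" "a \<le> n" "b \<le> n" "0 \<le> c" "0 \<le> a"
  shows "a^2 - b^2 \<le> 2 * n * c"
proof (cases "a \<le> b")
  case True
  then have "a^2 \<le> b^2" using assms by (intro power_mono) auto
  then show ?thesis using assms by (smt (verit) mult_nonneg_nonneg)
next
  case False
  have "a^2 - b^2 = (a - b) * (a + b)" by (simp add: power2_eq_square algebra_simps)
  also have "\<dots> \<le> c * (2 * n)"
    using False assms by (intro mult_mono) auto
  finally show ?thesis by (simp add: ac_simps)
qed

lemma sq_diff_bound: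
  fixes x y :: "nat \<Rightarrow> nat"
  assumes "finite S" "card S \<le> K" "\<forall>i<n. i \<notin> B \<longrightarrow> (\<forall>q\<in>S. q dvd x i \<longleftrightarrow> q dvd y i)"
  shows "(\<Sum>q\<in>S. real (Ycount n x q) ^ 2) - (\<Sum>q\<in>S. real (Ycount n y q) ^ 2)
         \<le> 2 * real n * real K * real (card (B \<inter> {0..<n}))"
proof -
  define c where "c = card (B \<inter> {0..<n})"
  have each: "real (Ycount n x q) ^ 2 - real (Ycount n y q) ^ 2 \<le> 2 * real n * real c" if "q \<in> S" for q
  proof -
    have sub: "{i \<in> {0..<n}. q dvd x i} \<subseteq> {i \<in> {0..<n}. q dvd y i} \<union> (B \<inter> {0..<n})"
      using assms(3) that by auto
    have "Ycount n x q \<le> card ({i \<in> {0..<n}. q dvd y i} \<union> (B \<inter> {0..<n}))"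
      unfolding Ycount_def by (rule card_mono[OF _ sub]) auto
    also have "\<dots> \<le> Ycount n y q + c"
      unfolding Ycount_def c_def by (rule card_Un_le)
    finally have 1: "Ycount n x q \<le> Ycount n y q + c" .
    have 2: "Ycount n x q \<le> n" "Ycount n y q \<le> n"
      unfolding Ycount_def by (auto intro!: card_mono[of "{0..<n}", simplified])
    show ?thesis
      by (rule sq_le) (use 1 2 in auto)
  qed
  have "(\<Sum>q\<in>S. real (Ycount n x q) ^ 2) - (\<Sum>q\<in>S. real (Ycount n y q) ^ 2)
       = (\<Sum>q\<in>S. real (Ycount n x q) ^ 2 - real (Ycount n y q) ^ 2)"
    by (simp add: sum_subtractf)
  also have "\<dots> \<le> (\<Sum>q\<in>S. 2 * real n * real c)"
    by (rule sum_mono) (rule each)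
  also have "\<dots> = real (card S) * (2 * real n * real c)" by simp
  also have "\<dots> \<le> real K * (2 * real n * real c)"
    using assms(2) by (intro mult_right_mono) auto
  finally show ?thesis by (simp add: c_def ac_simps)
qed

lemma union_bound:
  fixes D :: "'a pmf" and Bd :: "'a set" and A :: "nat set" and t r :: real
  assumes "finite A" "measure_pmf.prob D Bd \<le> r" "0 < r" "r \<le> 1"
  shows "measure_pmf.prob (Pi_pmf A d (\<lambda>_. D)) {f. t \<le> real (card {i\<in>A. f i \<in> Bd})}
           \<le> 2 ^ card A * r powr t"
proof -
  define F where "F = (\<lambda>T. Pi A (\<lambda>i. if i \<in> T then Bd else UNIV))"
  define I where "I = {T. T \<subseteq> A \<and> t \<le> real (card T)}"
  let ?P = "Pi_pmf A d (\<lambda>_. D)"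
  have finI: "finite I" using assms(1) by (auto simp: I_def)
  have "{f. t \<le> real (card {i\<in>A. f i \<in> Bd})} \<subseteq> \<Union> (F ` I)"
  proof
    fix f assume f: "f \<in> {f. t \<le> real (card {i\<in>A. f i \<in> Bd})}"
    have "{i\<in>A. f i \<in> Bd} \<in> I" using f by (auto simp: I_def)
    moreover have "f \<in> F {i\<in>A. f i \<in> Bd}" by (auto simp: F_def)
    ultimately show "f \<in> \<Union> (F ` I)" by blast
  qed
  then have "measure_pmf.prob ?P {f. t \<le> real (card {i\<in>A. f i \<in> Bd})} \<le> measure_pmf.prob ?P (\<Union> (F ` I))"
    by (intro measure_pmf.finite_measure_mono) auto
  also have "\<dots> \<le> (\<Sum>T\<in>I. measure_pmf.prob ?P (F T))"
    by (rule measure_pmf.finite_measure_subadditive_finite[OF finI]) auto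
  also have "\<dots> \<le> (\<Sum>T\<in>I. r powr t)"
  proof (rule sum_mono)
    fix T assume T: "T \<in> I"
    have "measure_pmf.prob ?P (F T) = (\<Prod>i\<in>A. measure_pmf.prob D (if i \<in> T then Bd else UNIV))"
      unfolding F_def using assms(1) by (rule measure_Pi_pmf_Pi)
    also have "\<dots> = (\<Prod>i\<in>A. if i \<in> T then measure_pmf.prob D Bd else 1)"
      by (intro prod.cong refl) auto
    also have "\<dots> = (\<Prod>i\<in>A \<inter> {i. i \<in> T}. measure_pmf.prob D Bd)"
      by (simp add: prod.If_cases[OF assms(1)])
    also have "A \<inter> {i. i \<in> T} = T" using T by (auto simp: I_def)
    also have "(\<Prod>i\<in>T. measure_pmf.prob D Bd) = measure_pmf.prob D Bd ^ card T" by simp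
    also have "\<dots> \<le> r ^ card T" using assms(2) by (intro power_mono) auto
    also have "\<dots> = r powr real (card T)" using assms(3) by (simp add: powr_realpow)
    also have "\<dots> \<le> r powr t" using T assms(3,4) by (intro powr_mono') (auto simp: I_def)
    finally show "measure_pmf.prob ?P (F T) \<le> r powr t" .
  qed
  also have "\<dots> = real (card I) * r powr t" by simp
  also have "\<dots> \<le> 2 ^ card A * r powr t"
  proof -
    have "I \<subseteq> Pow A" by (auto simp: I_def)
    then have "card I \<le> card (Pow A)" using assms(1) by (intro card_mono) auto
    then have "real (card I) \<le> 2 ^ card A" using assms(1) by (simp add: card_Pow)
    then show ?thesis by (intro mult_right_mono) auto
  qed
  finally show ?thesis .
qed

theorem lemma3p7:
  fixes k1 k2 n m :: nat
  assumes "k1 < k2"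
    and "m \<ge> 1"
    and "m * (\<Prod>p\<in>primes_between k1 k2. p) \<le> n"
    and "n < (m + 1) * (\<Prod>p\<in>primes_between k1 k2. p)"
  shows "\<exists>\<mu> :: ((nat \<Rightarrow> nat) \<times> (nat \<Rightarrow> nat)) pmf.
           map_pmf fst \<mu> = iid_law n (unif_law n) \<and>
           map_pmf snd \<mu> = iid_law n (tilde_law (primes_between k1 k2)) \<and>
           (\<forall>\<epsilon>::real. \<epsilon> > 0 \<longrightarrow>
              measure_pmf.prob \<mu>
                {(x, y). (\<Sum>q\<in>primes_between k1 k2. real (Ycount n x q) ^ 2)
                       - (\<Sum>q\<in>primes_between k1 k2. real (Ycount n y q) ^ 2)
                       \<ge> real n ^ 2 * \<epsilon>}
              \<le> 2 ^ n * (1 / real m) powr (real n * \<epsilon> / (2 * real k2)))"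
proof -
  define S where "S = primes_between k1 k2"
  have Ssub: "S \<subseteq> {1..k2}" by (auto simp: S_def primes_between_def prime_ge_1_nat)
  have finS: "finite S" using Ssub finite_subset by blast
  have cardS: "card S \<le> k2" using card_mono[OF _ Ssub] by simp
  have prS: "\<forall>p\<in>S. prime p" by (auto simp: S_def primes_between_def)
  have P: "(\<Prod>p\<in>S. p) = \<Prod>S" by simp
  define M where "M = m * \<Prod>S"
  have Mn: "M \<le> n" using assms(3) by (simp add: M_def S_def)
  have Ppos: "\<Prod>S > 0" using prS prime_gt_0_nat by (auto simp: prod_pos)
  then have Mpos: "M > 0" using assms(2) M_def by simp
  then have npos: "n > 0" using Mn by simp
  define \<nu> where "\<nu> = nu S M n"
  define PP where "PP = Pi_pmf {0..<n} (0::nat, 0::nat) (\<lambda>_. \<nu>)"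
  define \<mu> where "\<mu> = map_pmf (\<lambda>f. (fst \<circ> f, snd \<circ> f)) PP"
  have fst\<mu>: "map_pmf fst \<mu> = iid_law n (unif_law n)"
  proof -
    have "map_pmf fst \<mu> = map_pmf (\<lambda>f. fst \<circ> f) PP" by (simp add: \<mu>_def pmf.map_comp o_def)
    also have "\<dots> = Pi_pmf {0..<n} 0 (\<lambda>_. map_pmf fst \<nu>)"
      unfolding PP_def by (rule Pi_pmf_map[symmetric]) auto
    finally show ?thesis by (simp add: \<nu>_def nu_fst iid_law_def unif_law_def)
  qed
  have snd\<mu>: "map_pmf snd \<mu> = iid_law n (tilde_law S)"
  proof -
    have "map_pmf snd \<mu> = map_pmf (\<lambda>f. snd \<circ> f) PP" by (simp add: \<mu>_def pmf.map_comp o_def)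
    also have "\<dots> = Pi_pmf {0..<n} 0 (\<lambda>_. map_pmf snd \<nu>)"
      unfolding PP_def by (rule Pi_pmf_map[symmetric]) auto
    finally show ?thesis
      using nu_snd[OF finS prS assms(2) M_def Mn] by (simp add: \<nu>_def iid_law_def)
  qed
  have supp: "\<forall>i<n. x i \<le> M \<longrightarrow> y i = hS S (x i)" if "(x, y) \<in> set_pmf \<mu>" for x y
  proof -
    have "(x, y) \<in> (\<lambda>f. (fst \<circ> f, snd \<circ> f)) ` set_pmf PP"
      using that by (simp add: \<mu>_def)
    then obtain f where f: "f \<in> set_pmf PP" "(x, y) = (fst \<circ> f, snd \<circ> f)"
      by blast
    then have f: "f \<in> set_pmf PP" "x = fst \<circ> f" "y = snd \<circ> f" by auto
    have "\<forall>i\<in>{0..<n}. f i \<in> set_pmf \<nu>"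
      using f(1) unfolding PP_def by (subst (asm) set_Pi_pmf) (auto simp: PiE_dflt_def)
    then show ?thesis using f nu_support unfolding \<nu>_def
      by (metis atLeastLessThan_iff comp_apply le0 prod.collapse)
  qed
  have prob_bad: "measure_pmf.prob (pmf_of_set {1..n}) {M<..} \<le> 1 / real m"
  proof -
    have "{1..n} \<inter> {M<..} = {M<..n}" using Mpos by auto
    then have "measure_pmf.prob (pmf_of_set {1..n}) {M<..} = real (n - M) / real n"
      using npos by (simp add: measure_pmf_of_set)
    also have "\<dots> \<le> 1 / real m"
    proof -
      have "n < M + \<Prod>S" using assms(4) by (simp add: M_def S_def algebra_simps)
      then have "n - M < \<Prod>S" using Mn by (simp add: less_diff_conv2)
      then have "m * (n - M) \<le> M" unfolding M_def using assms(2) by simp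
      then have "m * (n - M) \<le> n" using Mn by simp
      then have "real m * real (n - M) \<le> real n" by (metis of_nat_le_iff of_nat_mult)
      then show ?thesis using npos assms(2) by (simp add: field_simps)
    qed
    finally show ?thesis .
  qed
  have bound: "measure_pmf.prob \<mu>
                {(x, y). (\<Sum>q\<in>S. real (Ycount n x q) ^ 2) - (\<Sum>q\<in>S. real (Ycount n y q) ^ 2)
                       \<ge> real n ^ 2 * \<epsilon>}
              \<le> 2 ^ n * (1 / real m) powr (real n * \<epsilon> / (2 * real k2))" if eps: "\<epsilon> > 0" for \<epsilon> :: real
  proof -
    define t where "t = real n * \<epsilon> / (2 * real k2)"
    define E where "E = {(x, y). (\<Sum>q\<in>S. real (Ycount n x q) ^ 2) - (\<Sum>q\<in>S. real (Ycount n y q) ^ 2)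
                       \<ge> real n ^ 2 * \<epsilon>}"
    define E' where "E' = {x :: nat \<Rightarrow> nat. t \<le> real (card {i\<in>{0..<n}. x i \<in> {M<..}})}"
    have k2pos: "real k2 > 0" using assms(1) by simp
    have sub: "E \<inter> set_pmf \<mu> \<subseteq> fst -` E'"
    proof
      fix z assume z: "z \<in> E \<inter> set_pmf \<mu>"
      obtain x y where xy: "z = (x, y)" by (cases z)
      define B where "B = {i. M < x i}"
      have agree: "\<forall>i<n. i \<notin> B \<longrightarrow> (\<forall>q\<in>S. q dvd x i \<longleftrightarrow> q dvd y i)"
        using supp[of x y] z xy hS_dvd[OF finS prS] by (auto simp: B_def)
      have "real n ^ 2 * \<epsilon> \<le> 2 * real n * real k2 * real (card (B \<inter> {0..<n}))"
        using sq_diff_bound[OF finS cardS agree] z xy by (auto simp: E_def)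
      then have "real n * (real n * \<epsilon>) \<le> real n * (2 * real k2 * real (card (B \<inter> {0..<n})))"
        by (simp add: power2_eq_square algebra_simps)
      then have "real n * \<epsilon> \<le> 2 * real k2 * real (card (B \<inter> {0..<n}))"
        using npos by (simp add: mult_le_cancel_left)
      then have "t \<le> real (card (B \<inter> {0..<n}))"
        unfolding t_def using k2pos by (simp add: field_simps)
      moreover have "B \<inter> {0..<n} = {i\<in>{0..<n}. x i \<in> {M<..}}" by (auto simp: B_def)
      ultimately show "z \<in> fst -` E'" using xy by (simp add: E'_def)
    qed
    have "measure_pmf.prob \<mu> E = measure_pmf.prob \<mu> (E \<inter> set_pmf \<mu>)"
      by (simp add: measure_Int_set_pmf)
    also have "\<dots> \<le> measure_pmf.prob \<mu> (fst -` E')"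
      by (rule measure_pmf.finite_measure_mono[OF sub]) auto
    also have "\<dots> = measure_pmf.prob (map_pmf fst \<mu>) E'"
      by (simp add: measure_map_pmf)
    also have "\<dots> = measure_pmf.prob (Pi_pmf {0..<n} 0 (\<lambda>_. pmf_of_set {1..n})) E'"
      by (simp add: fst\<mu> iid_law_def unif_law_def)
    also have "\<dots> \<le> 2 ^ card {0..<n} * (1 / real m) powr t"
      unfolding E'_def using prob_bad assms(2) by (intro union_bound) auto
    finally show ?thesis by (simp add: E_def t_def)
  qed
  show ?thesis
    using fst\<mu> snd\<mu> bound unfolding S_def by blast
qed

end
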